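(* Let $\mathbf{F}_x,\mathbf{F}_y\in\mathbb{R}^{N\times N}$ be symmetric and negative semi-definite, and let $\Delta t>0$ be arbitrary. Let $\mathbf{U}^n=\mathbf{V}^{x,n}\mathbf{S}^n(\mathbf{V}^{y,n})^T$ with $\mathbf{V}^{x,n},\mathbf{V}^{y,n}\in\mathbb{R}^{N\times r^n}$ having orthonormal columns, and let $\mathbf{U}^{n+1}=\mathbf{V}^{x,n+1}\mathbf{S}^{n+1}(\mathbf{V}^{y,n+1})^T$ be produced from $\mathbf{U}^n$ by one step of the first-order RAIL scheme (described in the context) for the matrix differential equation $\frac{d\mathbf{U}}{dt}=\mathbf{F}_x\mathbf{U}+\mathbf{U}\mathbf{F}_y^T$. Then $\|\mathbf{U}^{n+1}\|_F\le\|\mathbf{U}^n\|_F$, i.e. the first-order RAIL scheme (based on backward Euler) is unconditionally stable in $L^2$ (equivalently, in the Frobenius norm of the solution matrix).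
   Context: The first-order RAIL (Reduced Augmentation Implicit Low-rank) scheme, based on the backward Euler discretization $\mathbf{U}^{n+1}=\mathbf{U}^n+\Delta t(\mathbf{F}_x\mathbf{U}^{n+1}+\mathbf{U}^{n+1}\mathbf{F}_y^T)$, computes $\mathbf{U}^{n+1}$ from $\mathbf{U}^n=\mathbf{V}^{x,n}\mathbf{S}^n(\mathbf{V}^{y,n})^T$ as follows. (1) K and L steps: solve the Sylvester equations $(\mathbf{I}-\Delta t\mathbf{F}_x)\mathbf{K}-\mathbf{K}\big(\Delta t(\mathbf{F}_y\mathbf{V}^{y,n})^T\mathbf{V}^{y,n}\big)=\mathbf{V}^{x,n}\mathbf{S}^n$ and $(\mathbf{I}-\Delta t\mathbf{F}_y)\mathbf{L}-\mathbf{L}\big(\Delta t(\mathbf{F}_x\mathbf{V}^{x,n})^T\mathbf{V}^{x,n}\big)=\mathbf{V}^{y,n}(\mathbf{S}^n)^T$ for $\mathbf{K},\mathbf{L}\in\mathbb{R}^{N\times r^n}$, and let $\mathbf{V}^{x}_{\ddagger},\mathbf{V}^{y}_{\ddagger}$ be the orthonormal factors of reduced QR factorizations $\mathbf{K}=\mathbf{V}^{x}_{\ddagger}\mathbf{R}$, $\mathbf{L}=\mathbf{V}^{y}_{\ddagger}\mathbf{R}'$. (2) Reduced augmentation: compute reduced QR factorizations $[\mathbf{V}^{x}_{\ddagger},\mathbf{V}^{x,n}]=\mathbf{Q}_x\mathbf{R}_x$ and $[\mathbf{V}^{y}_{\ddagger},\mathbf{V}^{y,n}]=\mathbf{Q}_y\mathbf{R}_y$;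 let $\hat r$ be the maximum of the numbers of singular values of $\mathbf{R}_x$ and of $\mathbf{R}_y$ exceeding $10^{-12}$; set $\hat{\mathbf{V}}^{x}=\mathbf{Q}_x$ times the first $\hat r$ left singular vectors of $\mathbf{R}_x$, and $\hat{\mathbf{V}}^{y}=\mathbf{Q}_y$ times the first $\hat r$ left singular vectors of $\mathbf{R}_y$ (both have orthonormal columns). (3) S step (Galerkin projection): solve the Sylvester equation $\big(\mathbf{I}-\Delta t(\hat{\mathbf{V}}^{x})^T\mathbf{F}_x\hat{\mathbf{V}}^{x}\big)\hat{\mathbf{S}}-\hat{\mathbf{S}}\big(\Delta t(\mathbf{F}_y\hat{\mathbf{V}}^{y})^T\hat{\mathbf{V}}^{y}\big)=(\hat{\mathbf{V}}^{x})^T\mathbf{V}^{x,n}\mathbf{S}^n(\mathbf{V}^{y,n})^T\hat{\mathbf{V}}^{y}$ for $\hat{\mathbf{S}}\in\mathbb{R}^{\hat r\times\hat r}$. (4) Truncation: compute the SVD $\hat{\mathbf{S}}=\mathbf{A}\boldsymbol{\Sigma}\mathbf{B}^T$, let $r^{n+1}$ be the number of singular values larger than a tolerance $\epsilon>0$, and set $\mathbf{V}^{x,n+1}=\hat{\mathbf{V}}^{x}\mathbf{A}(:,1\!:\!r^{n+1})$, $\mathbf{S}^{n+1}=\boldsymbol{\Sigma}(1\!:\!r^{n+1},1\!:\!r^{n+1})$, $\mathbf{V}^{y,n+1}=\hat{\mathbf{V}}^{y}\mathbf{B}(:,1\!:\!r^{n+1})$. Here $\|\cdot\|_F$ is the Frobenius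 norm. *)

theory Defs
  imports Complex_Main "Jordan_Normal_Form.Matrix"
begin

text \<open>Real matrices are represented by the Jordan_Normal_Form type 'real mat'
  (dimensions carried by the value, so the varying ranks r^n, r-hat, r^(n+1) are unproblematic).\<close>

definition symmetric_mat :: "real mat \<Rightarrow> bool" where
  "symmetric_mat A \<longleftrightarrow> A\<^sup>T = A"

definition neg_semidef :: "nat \<Rightarrow> real mat \<Rightarrow> bool" where
  "neg_semidef n A \<longleftrightarrow> A \<in> carrier_mat n n \<and>
     (\<forall>v \<in> carrier_vec n. v \<bullet> (A *\<^sub>v v) \<le> 0)"

definition orthonormal_cols :: "nat \<Rightarrow> nat \<Rightarrow> real mat \<Rightarrow> bool" where
  "orthonormal_cols n m A \<longleftrightarrow> A \<in> carrier_mat n m \<and> A\<^sup>T * A = 1\<^sub>m m"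

definition frob_norm :: "real mat \<Rightarrow> real" where
  "frob_norm A = sqrt (\<Sum>i<dim_row A. \<Sum>j<dim_col A. (A $$ (i,j))\<^sup>2)"

definition append_cols :: "real mat \<Rightarrow> real mat \<Rightarrow> real mat" where
  "append_cols A B = mat (dim_row A) (dim_col A + dim_col B)
     (\<lambda>(i,j). if j < dim_col A then A $$ (i,j) else B $$ (i, j - dim_col A))"

definition first_cols :: "nat \<Rightarrow> real mat \<Rightarrow> real mat" where
  "first_cols k A = mat (dim_row A) k (\<lambda>(i,j). A $$ (i,j))"

definition lead_block :: "nat \<Rightarrow> real mat \<Rightarrow> real mat" where
  "lead_block k A = mat k k (\<lambda>(i,j). A $$ (i,j))"

definition reduced_qr :: "real mat \<Rightarrow> real mat \<Rightarrow> real mat \<Rightarrow> bool" where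
  "reduced_qr A Q R \<longleftrightarrow>
     (let n = dim_row A; m = dim_col A; k = min n m in
       orthonormal_cols n k Q \<and> R \<in> carrier_mat k m \<and> upper_triangular R \<and> A = Q * R)"

definition is_svd :: "real mat \<Rightarrow> real mat \<Rightarrow> real mat \<Rightarrow> real mat \<Rightarrow> bool" where
  "is_svd A P Sig W \<longleftrightarrow>
     (let n = dim_row A; m = dim_col A in
       orthonormal_cols n n P \<and> orthonormal_cols m m W \<and> Sig \<in> carrier_mat n m \<and>
       (\<forall>i<n. \<forall>j<m. i \<noteq> j \<longrightarrow> Sig $$ (i,j) = 0) \<and>
       (\<forall>i<min n m. 0 \<le> Sig $$ (i,i)) \<and>
       (\<forall>i j. i \<le> j \<longrightarrow> j < min n m \<longrightarrow> Sig $$ (j,j) \<le> Sig $$ (i,i)) \<and>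
       A = P * Sig * W\<^sup>T)"

definition num_sv_above :: "real \<Rightarrow> real mat \<Rightarrow> nat" where
  "num_sv_above tau Sig = card {i. i < min (dim_row Sig) (dim_col Sig) \<and> Sig $$ (i,i) > tau}"

end

theory Submission
  imports Defs
begin

definition ip :: "real mat \<Rightarrow> real mat \<Rightarrow> real" where
  "ip X Y = (\<Sum>i<dim_row X. \<Sum>j<dim_col X. X $$ (i,j) * Y $$ (i,j))"

lemma frob_ip: "frob_norm X = sqrt (ip X X)"
  unfolding frob_norm_def ip_def by (simp add: power2_eq_square)

lemma ip_mult_left:
  assumes A: "A \<in> carrier_mat n k" and B: "B \<in> carrier_mat k m" and C: "C \<in> carrier_mat n m"
  shows "ip (A*B) C = ip B (A\<^sup>T*C)"
proof -
  have "ip (A*B) C = (\<Sum>i<n. \<Sum>j<m. \<Sum>l<k. A$$(i,l) * B$$(l,j) * C$$(i,j))"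
    using A B C unfolding ip_def
    by (simp add: scalar_prod_def sum_distrib_right atLeast0LessThan)
  also have "\<dots> = (\<Sum>l<k. \<Sum>j<m. \<Sum>i<n. A$$(i,l) * B$$(l,j) * C$$(i,j))"
    by (subst sum.swap, subst sum.swap, rule sum.cong, simp, subst sum.swap, simp)
  also have "\<dots> = ip B (A\<^sup>T*C)"
    using A B C unfolding ip_def
    by (simp add: scalar_prod_def sum_distrib_left atLeast0LessThan mult_ac)
  finally show ?thesis .
qed

lemma ip_mult_right:
  assumes A: "A \<in> carrier_mat m k" and B: "B \<in> carrier_mat n m" and C: "C \<in> carrier_mat n k"
  shows "ip (B*A) C = ip B (C*A\<^sup>T)"
proof -
  have "ip (B*A) C = (\<Sum>i<n. \<Sum>j<k. \<Sum>l<m. B$$(i,l) * A$$(l,j) * C$$(i,j))"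
    using A B C unfolding ip_def
    by (simp add: scalar_prod_def sum_distrib_right atLeast0LessThan)
  also have "\<dots> = (\<Sum>i<n. \<Sum>l<m. \<Sum>j<k. B$$(i,l) * A$$(l,j) * C$$(i,j))"
    by (rule sum.cong, simp, subst sum.swap, simp)
  also have "\<dots> = ip B (C*A\<^sup>T)"
    using A B C unfolding ip_def
    by (simp add: scalar_prod_def sum_distrib_left atLeast0LessThan mult_ac)
  finally show ?thesis .
qed

lemma ip_transpose:
  assumes "X \<in> carrier_mat n m" "Y \<in> carrier_mat n m"
  shows "ip X\<^sup>T Y\<^sup>T = ip X Y"
  using assms unfolding ip_def by (simp, subst sum.swap, simp)

lemma ip_comm: assumes "X \<in> carrier_mat n m" "Y \<in> carrier_mat n m"
  shows "ip X Y = ip Y X"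
  using assms unfolding ip_def by (simp add: mult.commute)

lemma ip_add_right: assumes "X \<in> carrier_mat n m" "Y \<in> carrier_mat n m" "Z \<in> carrier_mat n m"
  shows "ip X (Y + Z) = ip X Y + ip X Z"
  using assms unfolding ip_def by (simp add: algebra_simps sum.distrib)

lemma ip_minus_right: assumes "X \<in> carrier_mat n m" "Y \<in> carrier_mat n m" "Z \<in> carrier_mat n m"
  shows "ip X (Y - Z) = ip X Y - ip X Z"
  using assms unfolding ip_def by (simp add: algebra_simps sum_subtractf)

lemma ip_smult_right: assumes "X \<in> carrier_mat n m" "Y \<in> carrier_mat n m"
  shows "ip X (c \<cdot>\<^sub>m Y) = c * ip X Y"
  using assms unfolding ip_def by (simp add: algebra_simps sum_distrib_left)

lemma ip_add_left: assumes "X \<in> carrier_mat n m" "Y \<in> carrier_mat n m" "Z \<in> carrier_mat n m"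
  shows "ip (Y + Z) X = ip Y X + ip Z X"
  using assms unfolding ip_def by (simp add: algebra_simps sum.distrib)

lemma ip_minus_left: assumes "X \<in> carrier_mat n m" "Y \<in> carrier_mat n m" "Z \<in> carrier_mat n m"
  shows "ip (Y - Z) X = ip Y X - ip Z X"
  using assms unfolding ip_def by (simp add: algebra_simps sum_subtractf)

lemma ip_self_nonneg: "ip X X \<ge> 0"
  unfolding ip_def by (intro sum_nonneg) auto

lemma ip_cols: assumes "X \<in> carrier_mat n m" "Y \<in> carrier_mat n m"
  shows "ip X Y = (\<Sum>j<m. col X j \<bullet> col Y j)"
  using assms unfolding ip_def scalar_prod_def
  by (simp add: atLeast0LessThan, subst sum.swap, simp)

lemma orth_carrier: "orthonormal_cols n k Q \<Longrightarrow> Q \<in> carrier_mat n k"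
  unfolding orthonormal_cols_def by auto

lemma orth_TQ: "orthonormal_cols n k Q \<Longrightarrow> Q\<^sup>T * Q = 1\<^sub>m k"
  unfolding orthonormal_cols_def by auto

lemma orth_mult: assumes "orthonormal_cols n k Q1" "orthonormal_cols k j Q2"
  shows "orthonormal_cols n j (Q1 * Q2)"
proof -
  have c1: "Q1 \<in> carrier_mat n k" and c2: "Q2 \<in> carrier_mat k j" using assms orth_carrier by auto
  have "(Q1 * Q2)\<^sup>T * (Q1 * Q2) = (Q2\<^sup>T * Q1\<^sup>T) * (Q1 * Q2)"
    using c1 c2 by (simp add: transpose_mult)
  also have "\<dots> = Q2\<^sup>T * (Q1\<^sup>T * (Q1 * Q2))" using c1 c2 by (intro assoc_mult_mat) auto
  also have "Q1\<^sup>T * (Q1 * Q2) = (Q1\<^sup>T * Q1) * Q2" using c1 c2 by (intro assoc_mult_mat[symmetric]) auto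
  also have "Q2\<^sup>T * ((Q1\<^sup>T * Q1) * Q2) = Q2\<^sup>T * Q2" using orth_TQ[OF assms(1)] c2 by simp
  also have "\<dots> = 1\<^sub>m j" using orth_TQ[OF assms(2)] .
  finally show ?thesis using c1 c2 unfolding orthonormal_cols_def by auto
qed

lemma orth_first_cols: assumes "orthonormal_cols n k Q" "j \<le> k"
  shows "orthonormal_cols n j (first_cols j Q)"
proof -
  have c: "Q \<in> carrier_mat n k" using assms orth_carrier by auto
  have e: "\<And>a b. a < k \<Longrightarrow> b < k \<Longrightarrow> (Q\<^sup>T * Q) $$ (a,b) = (1\<^sub>m k) $$ (a,b)"
    using orth_TQ[OF assms(1)] by simp
  show ?thesis unfolding orthonormal_cols_def first_cols_def
  proof (intro conjI)
    show "mat (dim_row Q) j (\<lambda>(i, j). Q $$ (i, j)) \<in> carrier_mat n j" using c by auto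
    show "(mat (dim_row Q) j (\<lambda>(i, j). Q $$ (i, j)))\<^sup>T * mat (dim_row Q) j (\<lambda>(i, j). Q $$ (i, j)) = 1\<^sub>m j"
    proof (rule eq_matI)
      fix a b assume ab: "a < dim_row (1\<^sub>m j)" "b < dim_col (1\<^sub>m j)"
      have "(Q\<^sup>T * Q) $$ (a,b) = (1\<^sub>m k) $$ (a,b)" using e ab assms(2) by auto
      then show "((mat (dim_row Q) j (\<lambda>(i, j). Q $$ (i, j)))\<^sup>T * mat (dim_row Q) j (\<lambda>(i, j). Q $$ (i, j))) $$ (a, b) = 1\<^sub>m j $$ (a, b)"
        using ab assms(2) c by (auto simp: scalar_prod_def)
    qed auto
  qed
qed

lemma E1: assumes "orthonormal_cols n k Q" "M \<in> carrier_mat k m"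
  shows "ip (Q*M) (Q*M) = ip M M"
proof -
  have c: "Q \<in> carrier_mat n k" using assms orth_carrier by auto
  have "ip (Q*M) (Q*M) = ip M (Q\<^sup>T * (Q * M))" using c assms by (intro ip_mult_left) auto
  also have "Q\<^sup>T * (Q * M) = (Q\<^sup>T * Q) * M" using c assms by (subst assoc_mult_mat) auto
  also have "\<dots> = M" using assms orth_TQ by auto
  finally show ?thesis .
qed

lemma E2: assumes "orthonormal_cols m k W" "M \<in> carrier_mat n k"
  shows "ip (M*W\<^sup>T) (M*W\<^sup>T) = ip M M"
proof -
  have c: "W \<in> carrier_mat m k" using assms orth_carrier by auto
  have "ip (M*W\<^sup>T) (M*W\<^sup>T) = ip M ((M*W\<^sup>T) * W\<^sup>T\<^sup>T)" using c assms by (intro ip_mult_right) auto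
  also have "(M*W\<^sup>T) * W\<^sup>T\<^sup>T = M * (W\<^sup>T * W)" using c assms by (subst assoc_mult_mat) auto
  also have "\<dots> = M" using assms orth_TQ by auto
  finally show ?thesis .
qed

lemma ip_expand: assumes "P \<in> carrier_mat n m" "M \<in> carrier_mat n m" "ip P (M - P) = 0"
  shows "ip P P \<le> ip M M"
proof -
  define D where "D = M - P"
  have D: "D \<in> carrier_mat n m" using assms D_def by auto
  have "M = P + D" using assms D_def by auto
  then have "ip M M = ip (P + D) (P + D)" by simp
  also have "\<dots> = ip P P + 2 * ip P D + ip D D"
    using assms D by (simp add: ip_add_left[of _ n m] ip_add_right[of _ n m] ip_comm[of D n m P])
  finally show ?thesis using assms ip_self_nonneg[of D] D_def by simp
qed

lemma I1: assumes "orthonormal_cols n k Q" "M \<in> carrier_mat n m"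
  shows "ip (Q\<^sup>T*M) (Q\<^sup>T*M) \<le> ip M M"
proof -
  have c: "Q \<in> carrier_mat n k" using assms orth_carrier by auto
  define P where "P = Q * (Q\<^sup>T * M)"
  have Pc: "P \<in> carrier_mat n m" using c assms P_def by auto
  have "ip P (M - P) = ip (Q\<^sup>T * M) (Q\<^sup>T * (M - P))"
    unfolding P_def using c assms Pc by (intro ip_mult_left) auto
  also have "Q\<^sup>T * (M - P) = Q\<^sup>T * M - (Q\<^sup>T * Q) * (Q\<^sup>T * M)"
    using c assms Pc unfolding P_def by (simp add: mult_minus_distrib_mat[of _ k n] assoc_mult_mat[of "Q\<^sup>T" k n Q k "Q\<^sup>T * M" m, symmetric])
  also have "\<dots> = 0\<^sub>m k m" using assms c by (simp add: orth_TQ)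
  also have "ip (Q\<^sup>T * M) (0\<^sub>m k m) = 0" unfolding ip_def using c assms by simp
  finally have "ip P P \<le> ip M M" using ip_expand Pc assms by blast
  moreover have "ip P P = ip (Q\<^sup>T*M) (Q\<^sup>T*M)" unfolding P_def using assms c by (intro E1) auto
  ultimately show ?thesis by simp
qed

lemma I2: assumes "orthonormal_cols m k W" "M \<in> carrier_mat n m"
  shows "ip (M*W) (M*W) \<le> ip M M"
proof -
  have c: "W \<in> carrier_mat m k" using assms orth_carrier by auto
  define P where "P = (M * W) * W\<^sup>T"
  have Pc: "P \<in> carrier_mat n m" using c assms P_def by auto
  have "ip P (M - P) = ip (M * W) ((M - P) * W\<^sup>T\<^sup>T)"
    unfolding P_def using c assms Pc by (intro ip_mult_right) auto
  also have "(M - P) * W\<^sup>T\<^sup>T = M * W - (M * W) * (W\<^sup>T * W)"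
  proof -
    have "(M - P) * W\<^sup>T\<^sup>T = M * W - P * W" using c assms Pc by (simp add: minus_mult_distrib_mat[of _ n m])
    moreover have "P * W = (M * W) * (W\<^sup>T * W)" unfolding P_def using c assms
      by (intro assoc_mult_mat[of _ n k _ m _ k]) auto
    ultimately show ?thesis by simp
  qed
  also have "\<dots> = 0\<^sub>m n k" using assms c by (simp add: orth_TQ)
  also have "ip (M * W) (0\<^sub>m n k) = 0" unfolding ip_def using c assms by simp
  finally have "ip P P \<le> ip M M" using ip_expand Pc assms by blast
  moreover have "ip P P = ip (M*W) (M*W)" unfolding P_def using assms c by (intro E2) auto
  ultimately show ?thesis by simp
qed

definition qnp :: "nat \<Rightarrow> real mat \<Rightarrow> bool" where
  "qnp k M \<longleftrightarrow> M \<in> carrier_mat k k \<and> (\<forall>v \<in> carrier_vec k. v \<bullet> (M *\<^sub>v v) \<le> 0)"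

lemma qnp_congr: assumes "neg_semidef N F" "V \<in> carrier_mat N k"
  shows "qnp k (V\<^sup>T * F * V)"
  unfolding qnp_def
proof (intro conjI ballI)
  have F: "F \<in> carrier_mat N N" using assms unfolding neg_semidef_def by auto
  show "V\<^sup>T * F * V \<in> carrier_mat k k" using F assms by auto
  fix v :: "real vec" assume v: "v \<in> carrier_vec k"
  have "(V\<^sup>T * F * V) *\<^sub>v v = (V\<^sup>T * F) *\<^sub>v (V *\<^sub>v v)"
    using F assms v by (intro assoc_mult_mat_vec[of _ k N]) auto
  also have "\<dots> = V\<^sup>T *\<^sub>v (F *\<^sub>v (V *\<^sub>v v))"
    using F assms v by (intro assoc_mult_mat_vec[of _ k N _ N]) auto
  finally have "(V\<^sup>T * F * V) *\<^sub>v v = V\<^sup>T *\<^sub>v (F *\<^sub>v (V *\<^sub>v v))" .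
  then have "v \<bullet> ((V\<^sup>T * F * V) *\<^sub>v v) = (V\<^sup>T *\<^sub>v (F *\<^sub>v (V *\<^sub>v v))) \<bullet> v"
    using F assms v by (simp add: comm_scalar_prod[of _ k])
  also have "\<dots> = (F *\<^sub>v (V *\<^sub>v v)) \<bullet> (V *\<^sub>v v)"
    using F assms v by (intro transpose_vec_mult_scalar) auto
  also have "\<dots> = (V *\<^sub>v v) \<bullet> (F *\<^sub>v (V *\<^sub>v v))"
    using F assms v by (simp add: comm_scalar_prod[of _ N])
  also have "\<dots> \<le> 0" using assms(1) assms(2) v unfolding neg_semidef_def by auto
  finally show "v \<bullet> ((V\<^sup>T * F * V) *\<^sub>v v) \<le> 0" .
qed

lemma qnp_transpose: assumes "qnp k M" shows "qnp k M\<^sup>T"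
  unfolding qnp_def
proof (intro conjI ballI)
  have M: "M \<in> carrier_mat k k" using assms unfolding qnp_def by auto
  show "M\<^sup>T \<in> carrier_mat k k" using M by auto
  fix v :: "real vec" assume v: "v \<in> carrier_vec k"
  have "v \<bullet> (M\<^sup>T *\<^sub>v v) = (M\<^sup>T *\<^sub>v v) \<bullet> v" using M v by (simp add: comm_scalar_prod[of _ k])
  also have "\<dots> = v \<bullet> (M *\<^sub>v v)" using M v by (intro transpose_vec_mult_scalar) auto
  also have "\<dots> \<le> 0" using assms v unfolding qnp_def by auto
  finally show "v \<bullet> (M\<^sup>T *\<^sub>v v) \<le> 0" .
qed

lemma qnp_ip: assumes "qnp k M" "S \<in> carrier_mat k m"
  shows "ip S (M * S) \<le> 0"
proof -
  have M: "M \<in> carrier_mat k k" using assms unfolding qnp_def by auto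
  have "ip S (M * S) = (\<Sum>j<m. col S j \<bullet> col (M * S) j)" using M assms by (intro ip_cols) auto
  also have "\<dots> = (\<Sum>j<m. col S j \<bullet> (M *\<^sub>v col S j))"
  proof (intro sum.cong refl)
    fix j assume "j \<in> {..<m}"
    then have "col (M * S) j = M *\<^sub>v col S j" using M assms by (intro col_mult2) auto
    then show "col S j \<bullet> col (M * S) j = col S j \<bullet> (M *\<^sub>v col S j)" by simp
  qed
  also have "\<dots> \<le> 0" using assms unfolding qnp_def by (intro sum_nonpos) auto
  finally show ?thesis .
qed

lemma qnp_ip_right: assumes "qnp k M" "S \<in> carrier_mat m k"
  shows "ip S (S * M) \<le> 0"
proof -
  have M: "M \<in> carrier_mat k k" using assms unfolding qnp_def by auto
  have "ip S (S * M) = ip S\<^sup>T ((S * M)\<^sup>T)" using M assms by (intro ip_transpose[symmetric]) auto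
  also have "(S * M)\<^sup>T = M\<^sup>T * S\<^sup>T" using M assms by (intro transpose_mult) auto
  also have "ip S\<^sup>T (M\<^sup>T * S\<^sup>T) \<le> 0" using assms qnp_transpose by (intro qnp_ip) auto
  finally show ?thesis .
qed

lemma energy: assumes S: "S \<in> carrier_mat k k" and Ax: "qnp k Ax" and Ay: "qnp k Ay" and dt: "dt \<ge> 0"
  and eq: "(1\<^sub>m k - dt \<cdot>\<^sub>m Ax) * S - S * (dt \<cdot>\<^sub>m Ay) = G"
  shows "ip S S \<le> ip G G"
proof -
  have Axc: "Ax \<in> carrier_mat k k" and Ayc: "Ay \<in> carrier_mat k k" using Ax Ay unfolding qnp_def by auto
  have c1: "Ax * S \<in> carrier_mat k k" "S * Ay \<in> carrier_mat k k" using S Axc Ayc by auto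
  have e1a: "(1\<^sub>m k - dt \<cdot>\<^sub>m Ax) * S = 1\<^sub>m k * S - (dt \<cdot>\<^sub>m Ax) * S"
    using S Axc by (intro minus_mult_distrib_mat[of _ k k]) auto
  have e1b: "(dt \<cdot>\<^sub>m Ax) * S = dt \<cdot>\<^sub>m (Ax * S)" using S Axc by (intro mult_smult_assoc_mat) auto
  have e1c: "1\<^sub>m k * S = S" using S by simp
  have e2: "S * (dt \<cdot>\<^sub>m Ay) = dt \<cdot>\<^sub>m (S * Ay)" using S Ayc by (intro mult_smult_distrib) auto
  have G: "G = (S - dt \<cdot>\<^sub>m (Ax * S)) - dt \<cdot>\<^sub>m (S * Ay)"
    unfolding eq[symmetric] by (simp only: e1a e1b e1c e2)
  have Gc0: "(S - dt \<cdot>\<^sub>m (Ax * S)) - dt \<cdot>\<^sub>m (S * Ay) \<in> carrier_mat k k"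
    by (rule minus_carrier_mat, rule smult_carrier_mat, rule c1(2))
  have Gc: "G \<in> carrier_mat k k" using Gc0 G by simp
  have c2: "dt \<cdot>\<^sub>m (Ax * S) \<in> carrier_mat k k" "dt \<cdot>\<^sub>m (S * Ay) \<in> carrier_mat k k"
    by (rule smult_carrier_mat, rule c1(1)) (rule smult_carrier_mat, rule c1(2))
  have c3: "S - dt \<cdot>\<^sub>m (Ax * S) \<in> carrier_mat k k" by (rule minus_carrier_mat, rule c2(1))
  have i1: "ip S G = ip S (S - dt \<cdot>\<^sub>m (Ax * S)) - ip S (dt \<cdot>\<^sub>m (S * Ay))"
    unfolding G by (rule ip_minus_right[OF S c3 c2(2)])
  have i2: "ip S (S - dt \<cdot>\<^sub>m (Ax * S)) = ip S S - ip S (dt \<cdot>\<^sub>m (Ax * S))"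
    by (rule ip_minus_right[OF S S c2(1)])
  have i3: "ip S (dt \<cdot>\<^sub>m (Ax * S)) = dt * ip S (Ax * S)" by (rule ip_smult_right[OF S c1(1)])
  have i4: "ip S (dt \<cdot>\<^sub>m (S * Ay)) = dt * ip S (S * Ay)" by (rule ip_smult_right[OF S c1(2)])
  have i5: "dt * ip S (Ax * S) \<le> 0" using qnp_ip[OF Ax S] dt by (simp add: mult_nonneg_nonpos)
  have i6: "dt * ip S (S * Ay) \<le> 0" using qnp_ip_right[OF Ay S] dt by (simp add: mult_nonneg_nonpos)
  have h1: "ip S S \<le> ip S G" using i1 i2 i3 i4 i5 i6 by linarith
  have SG: "S - G \<in> carrier_mat k k" by (rule minus_carrier_mat, rule Gc)
  have j1: "ip (S - G) (S - G) = ip S (S - G) - ip G (S - G)"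
    by (rule ip_minus_left[OF SG S Gc])
  have j2: "ip S (S - G) = ip S S - ip S G" by (rule ip_minus_right[OF S S Gc])
  have j3: "ip G (S - G) = ip G S - ip G G" by (rule ip_minus_right[OF Gc S Gc])
  have j4: "ip G S = ip S G" by (rule ip_comm[OF Gc S])
  have "ip (S - G) (S - G) \<ge> 0" by (rule ip_self_nonneg)
  then have "ip S S - 2 * ip S G + ip G G \<ge> 0" using j1 j2 j3 j4 by linarith
  then show ?thesis using h1 by linarith
qed

lemma lead_block_le: assumes "Sig \<in> carrier_mat k k" "r \<le> k"
  shows "ip (lead_block r Sig) (lead_block r Sig) \<le> ip Sig Sig"
proof -
  have "ip (lead_block r Sig) (lead_block r Sig) = (\<Sum>i<r. \<Sum>j<r. Sig $$ (i,j) * Sig $$ (i,j))"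
    unfolding ip_def lead_block_def by simp
  also have "\<dots> \<le> (\<Sum>i<r. \<Sum>j<k. Sig $$ (i,j) * Sig $$ (i,j))"
    using assms by (intro sum_mono sum_mono2) auto
  also have "\<dots> \<le> (\<Sum>i<k. \<Sum>j<k. Sig $$ (i,j) * Sig $$ (i,j))"
    using assms by (intro sum_mono2) (auto intro: sum_nonneg)
  also have "\<dots> = ip Sig Sig" unfolding ip_def using assms by simp
  finally show ?thesis .
qed

theorem mainTheorem1:
  fixes N r :: nat and dt eps :: real
    and Fx Fy Vxn Vyn Sn :: "real mat"
    and K L Vxd Vyd R R' :: "real mat"
    and Qx Rx Qy Ry Px Sigx Wx Py Sigy Wy :: "real mat"
    and rhat :: nat and Vhx Vhy Shat A Sig B :: "real mat"
    and r1 :: nat and Vx1 S1 Vy1 :: "real mat"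
  assumes Fx_sym: "symmetric_mat Fx" and Fx_nsd: "neg_semidef N Fx"
    and Fy_sym: "symmetric_mat Fy" and Fy_nsd: "neg_semidef N Fy"
    and dt_pos: "dt > 0" and eps_pos: "eps > 0"
    and Vxn: "orthonormal_cols N r Vxn" and Vyn: "orthonormal_cols N r Vyn"
    and Sn: "Sn \<in> carrier_mat r r"
    \<comment> \<open>(1) K and L steps\<close>
    and K: "K \<in> carrier_mat N r"
    and K_eq: "(1\<^sub>m N - dt \<cdot>\<^sub>m Fx) * K - K * (dt \<cdot>\<^sub>m ((Fy * Vyn)\<^sup>T * Vyn)) = Vxn * Sn"
    and L: "L \<in> carrier_mat N r"
    and L_eq: "(1\<^sub>m N - dt \<cdot>\<^sub>m Fy) * L - L * (dt \<cdot>\<^sub>m ((Fx * Vxn)\<^sup>T * Vxn)) = Vyn * Sn\<^sup>T"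
    and K_qr: "reduced_qr K Vxd R" and L_qr: "reduced_qr L Vyd R'"
    \<comment> \<open>(2) reduced augmentation\<close>
    and x_qr: "reduced_qr (append_cols Vxd Vxn) Qx Rx"
    and y_qr: "reduced_qr (append_cols Vyd Vyn) Qy Ry"
    and x_svd: "is_svd Rx Px Sigx Wx" and y_svd: "is_svd Ry Py Sigy Wy"
    and rhat_def: "rhat = max (num_sv_above (10 powi (-12)) Sigx) (num_sv_above (10 powi (-12)) Sigy)"
    and Vhx_def: "Vhx = Qx * first_cols rhat Px"
    and Vhy_def: "Vhy = Qy * first_cols rhat Py"
    \<comment> \<open>(3) S step\<close>
    and Shat: "Shat \<in> carrier_mat rhat rhat"
    and Shat_eq: "(1\<^sub>m rhat - dt \<cdot>\<^sub>m (Vhx\<^sup>T * Fx * Vhx)) * Shat - Shat * (dt \<cdot>\<^sub>m ((Fy * Vhy)\<^sup>T * Vhy))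
                  = Vhx\<^sup>T * Vxn * Sn * Vyn\<^sup>T * Vhy"
    \<comment> \<open>(4) truncation\<close>
    and S_svd: "is_svd Shat A Sig B"
    and r1_def: "r1 = num_sv_above eps Sig"
    and Vx1_def: "Vx1 = Vhx * first_cols r1 A"
    and S1_def: "S1 = lead_block r1 Sig"
    and Vy1_def: "Vy1 = Vhy * first_cols r1 B"
  shows "frob_norm (Vx1 * S1 * Vy1\<^sup>T) \<le> frob_norm (Vxn * Sn * Vyn\<^sup>T)"
proof -
  have Kc: "dim_row K = N" "dim_col K = r" using K by auto
  have Vxd: "orthonormal_cols N (min N r) Vxd" using K_qr Kc unfolding reduced_qr_def Let_def by auto
  have Lc: "dim_row L = N" "dim_col L = r" using L by auto
  have Vyd: "orthonormal_cols N (min N r) Vyd" using L_qr Lc unfolding reduced_qr_def Let_def by auto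
  have Vxnc: "Vxn \<in> carrier_mat N r" using Vxn orth_carrier by auto
  have Vync: "Vyn \<in> carrier_mat N r" using Vyn orth_carrier by auto
  have ax: "dim_row (append_cols Vxd Vxn) = N" "dim_col (append_cols Vxd Vxn) = min N r + r"
    using Vxd Vxnc orth_carrier[OF Vxd] unfolding append_cols_def by auto
  have ay: "dim_row (append_cols Vyd Vyn) = N" "dim_col (append_cols Vyd Vyn) = min N r + r"
    using Vyd Vync orth_carrier[OF Vyd] unfolding append_cols_def by auto
  define kk where "kk = min N (min N r + r)"
  have Qx: "orthonormal_cols N kk Qx" and Rx: "Rx \<in> carrier_mat kk (min N r + r)"
    using x_qr ax unfolding reduced_qr_def Let_def kk_def by auto
  have Qy: "orthonormal_cols N kk Qy" and Ry: "Ry \<in> carrier_mat kk (min N r + r)"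
    using y_qr ay unfolding reduced_qr_def Let_def kk_def by auto
  have Px: "orthonormal_cols kk kk Px" and Sigx: "Sigx \<in> carrier_mat kk (min N r + r)"
    using x_svd Rx unfolding is_svd_def Let_def by auto
  have Py: "orthonormal_cols kk kk Py" and Sigy: "Sigy \<in> carrier_mat kk (min N r + r)"
    using y_svd Ry unfolding is_svd_def Let_def by auto
  have nsv: "num_sv_above t M \<le> dim_row M" for t M
  proof -
    have "num_sv_above t M \<le> card {..<min (dim_row M) (dim_col M)}"
      unfolding num_sv_above_def by (intro card_mono) auto
    then show ?thesis by simp
  qed
  have nsv2: "num_sv_above t M \<le> dim_col M" for t M
  proof -
    have "num_sv_above t M \<le> card {..<min (dim_row M) (dim_col M)}"
      unfolding num_sv_above_def by (intro card_mono) auto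
    then show ?thesis by simp
  qed
  have rk: "rhat \<le> kk" unfolding rhat_def using nsv[of _ Sigx] nsv[of _ Sigy] Sigx Sigy by auto
  have Vhx: "orthonormal_cols N rhat Vhx" unfolding Vhx_def
    by (rule orth_mult[OF Qx orth_first_cols[OF Px rk]])
  have Vhy: "orthonormal_cols N rhat Vhy" unfolding Vhy_def
    by (rule orth_mult[OF Qy orth_first_cols[OF Py rk]])
  have Vhxc: "Vhx \<in> carrier_mat N rhat" using Vhx orth_carrier by auto
  have Vhyc: "Vhy \<in> carrier_mat N rhat" using Vhy orth_carrier by auto
  have Fxc: "Fx \<in> carrier_mat N N" using Fx_nsd unfolding neg_semidef_def by auto
  have Fyc: "Fy \<in> carrier_mat N N" using Fy_nsd unfolding neg_semidef_def by auto
  have Ay: "(Fy * Vhy)\<^sup>T * Vhy = Vhy\<^sup>T * Fy * Vhy"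
    using Fy_sym Fyc Vhyc unfolding symmetric_mat_def by (simp add: transpose_mult[of Fy N N Vhy rhat])
  have qx: "qnp rhat (Vhx\<^sup>T * Fx * Vhx)" by (rule qnp_congr[OF Fx_nsd Vhxc])
  have qy: "qnp rhat ((Fy * Vhy)\<^sup>T * Vhy)" unfolding Ay by (rule qnp_congr[OF Fy_nsd Vhyc])
  have en: "ip Shat Shat \<le> ip (Vhx\<^sup>T * Vxn * Sn * Vyn\<^sup>T * Vhy) (Vhx\<^sup>T * Vxn * Sn * Vyn\<^sup>T * Vhy)"
    using dt_pos by (intro energy[OF Shat qx qy _ Shat_eq]) auto
  define U where "U = Vxn * Sn * Vyn\<^sup>T"
  have Uc: "U \<in> carrier_mat N N" unfolding U_def using Vxnc Vync Sn by auto
  have g1: "Vhx\<^sup>T * Vxn * Sn = Vhx\<^sup>T * (Vxn * Sn)" using Vhxc Vxnc Sn by (intro assoc_mult_mat) auto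
  have g2: "Vhx\<^sup>T * (Vxn * Sn) * Vyn\<^sup>T = Vhx\<^sup>T * U" unfolding U_def using Vhxc Vxnc Sn Vync
    by (intro assoc_mult_mat[of _ rhat N _ r _ N]) auto
  have G: "Vhx\<^sup>T * Vxn * Sn * Vyn\<^sup>T * Vhy = (Vhx\<^sup>T * U) * Vhy" using g1 g2 by simp
  have "ip ((Vhx\<^sup>T * U) * Vhy) ((Vhx\<^sup>T * U) * Vhy) \<le> ip (Vhx\<^sup>T * U) (Vhx\<^sup>T * U)"
    using Vhxc Uc by (intro I2[OF Vhy]) auto
  also have "\<dots> \<le> ip U U" by (rule I1[OF Vhx Uc])
  finally have en2: "ip Shat Shat \<le> ip U U" using en G by simp
  have A: "orthonormal_cols rhat rhat A" and B: "orthonormal_cols rhat rhat B"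
    and Sigc: "Sig \<in> carrier_mat rhat rhat" and Sh: "Shat = A * Sig * B\<^sup>T"
    using S_svd Shat unfolding is_svd_def Let_def by auto
  have Ac: "A \<in> carrier_mat rhat rhat" and Bc: "B \<in> carrier_mat rhat rhat" using A B orth_carrier by auto
  have "Shat = A * (Sig * B\<^sup>T)" using Sh Ac Bc Sigc by (simp add: assoc_mult_mat[of A rhat rhat Sig rhat])
  moreover have "ip (A * (Sig * B\<^sup>T)) (A * (Sig * B\<^sup>T)) = ip (Sig * B\<^sup>T) (Sig * B\<^sup>T)"
    using Sigc Bc by (intro E1[OF A]) auto
  ultimately have "ip Shat Shat = ip (Sig * B\<^sup>T) (Sig * B\<^sup>T)" by simp
  also have "\<dots> = ip Sig Sig" by (rule E2[OF B Sigc])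
  finally have sh: "ip Shat Shat = ip Sig Sig" .
  have r1k: "r1 \<le> rhat" unfolding r1_def using nsv[of _ Sig] Sigc by auto
  have Vx1: "orthonormal_cols N r1 Vx1" unfolding Vx1_def by (rule orth_mult[OF Vhx orth_first_cols[OF A r1k]])
  have Vy1: "orthonormal_cols N r1 Vy1" unfolding Vy1_def by (rule orth_mult[OF Vhy orth_first_cols[OF B r1k]])
  have S1c: "S1 \<in> carrier_mat r1 r1" unfolding S1_def lead_block_def by auto
  have Vx1c: "Vx1 \<in> carrier_mat N r1" using Vx1 orth_carrier by auto
  have "ip (Vx1 * S1 * Vy1\<^sup>T) (Vx1 * S1 * Vy1\<^sup>T) = ip (Vx1 * S1) (Vx1 * S1)"
    using Vx1c S1c by (intro E2[OF Vy1]) auto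
  also have "\<dots> = ip S1 S1" by (rule E1[OF Vx1 S1c])
  also have "\<dots> \<le> ip Sig Sig" unfolding S1_def by (rule lead_block_le[OF Sigc r1k])
  finally have "ip (Vx1 * S1 * Vy1\<^sup>T) (Vx1 * S1 * Vy1\<^sup>T) \<le> ip U U" using sh en2 by simp
  then show ?thesis unfolding frob_ip U_def by (rule real_sqrt_le_mono)
qed

end
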